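(* Let $G$ be a connected graph and $P$ an isometric path in $G$ of length at least $2$. For every $v\in V(G)\setminus V(P)$, we have $|S_P(v)|=1$ if and only if there exists a bypath $B$ of $P$ in $G$ such that $v\in V(B)$.
   Context: $d$ denotes distance in $G$. A path $P$ in $G$ is isometric if $d_P(x,y)=d_G(x,y)$ for all $x,y\in V(P)$. The wide shadow of $v\in V(G)$ on $P$ is $S_P(v)=\{y\in V(P): d(y,x)\le d(v,x)\text{ for all }x\in V(P)\}$. For a subgraph $H$ of $G$ and an isometric path $P=v_1v_2\cdots v_k$ in $H$, a bypath of $P$ in $H$ is a path $B=b_1b_2\cdots b_t$ with $t\ge3$ and $V(B)\subseteq V(H)$, such that $b_1=v_i$, $b_t=v_j$ for some $1\le i<j\le k$, $V(B)\cap V(P)=\{v_i,v_j\}$, and the path $v_1\cdots v_i b_2\cdots b_{t-1} v_j\cdots v_k$ is also an isometric path in $H$. (Here $H=G$.) *)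

theory Defs
  imports Main
begin

definition graph :: "'a set \<Rightarrow> ('a \<Rightarrow> 'a \<Rightarrow> bool) \<Rightarrow> bool" where
  "graph V E \<longleftrightarrow> finite V \<and> (\<forall>x y. E x y \<longrightarrow> x \<in> V \<and> y \<in> V \<and> E y x \<and> x \<noteq> y)"

definition walk :: "('a \<Rightarrow> 'a \<Rightarrow> bool) \<Rightarrow> 'a list \<Rightarrow> bool" where
  "walk E xs \<longleftrightarrow> xs \<noteq> [] \<and> (\<forall>i. Suc i < length xs \<longrightarrow> E (xs ! i) (xs ! Suc i))"

definition connected_graph :: "'a set \<Rightarrow> ('a \<Rightarrow> 'a \<Rightarrow> bool) \<Rightarrow> bool" where
  "connected_graph V E \<longleftrightarrow> graph V E \<and> V \<noteq> {} \<and>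
     (\<forall>x\<in>V. \<forall>y\<in>V. \<exists>xs. walk E xs \<and> hd xs = x \<and> last xs = y)"

definition dist :: "('a \<Rightarrow> 'a \<Rightarrow> bool) \<Rightarrow> 'a \<Rightarrow> 'a \<Rightarrow> nat" where
  "dist E x y = (LEAST n. \<exists>xs. walk E xs \<and> hd xs = x \<and> last xs = y \<and> length xs = Suc n)"

definition is_path :: "'a set \<Rightarrow> ('a \<Rightarrow> 'a \<Rightarrow> bool) \<Rightarrow> 'a list \<Rightarrow> bool" where
  "is_path V E P \<longleftrightarrow> walk E P \<and> distinct P \<and> set P \<subseteq> V"

definition path_edges :: "'a list \<Rightarrow> 'a \<Rightarrow> 'a \<Rightarrow> bool" where
  "path_edges P x y \<longleftrightarrow> (\<exists>i. Suc i < length P \<and> {x, y} = {P ! i, P ! Suc i})"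

definition isometric_path :: "'a set \<Rightarrow> ('a \<Rightarrow> 'a \<Rightarrow> bool) \<Rightarrow> 'a list \<Rightarrow> bool" where
  "isometric_path V E P \<longleftrightarrow> is_path V E P \<and>
     (\<forall>x\<in>set P. \<forall>y\<in>set P. dist (path_edges P) x y = dist E x y)"

definition wide_shadow :: "('a \<Rightarrow> 'a \<Rightarrow> bool) \<Rightarrow> 'a list \<Rightarrow> 'a \<Rightarrow> 'a set" where
  "wide_shadow E P v = {y \<in> set P. \<forall>x\<in>set P. dist E y x \<le> dist E v x}"

definition bypath :: "'a set \<Rightarrow> ('a \<Rightarrow> 'a \<Rightarrow> bool) \<Rightarrow> 'a list \<Rightarrow> 'a list \<Rightarrow> bool" where
  "bypath V E P B \<longleftrightarrow> is_path V E B \<and> length B \<ge> 3 \<and>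
     (\<exists>i j. i < j \<and> j < length P \<and> hd B = P ! i \<and> last B = P ! j \<and>
        set B \<inter> set P = {P ! i, P ! j} \<and>
        isometric_path V E (take i P @ B @ drop (Suc j) P))"

end

theory Submission
  imports Defs
begin

lemma walk_succ: "walk E xs \<longleftrightarrow> xs \<noteq> [] \<and> successively E xs"
  unfolding walk_def successively_conv_nth by auto

definition join :: "'a list \<Rightarrow> 'a list \<Rightarrow> 'a list" where
  "join xs ys = xs @ tl ys"

lemma join_walk:
  assumes "walk E xs" "walk E ys" "last xs = hd ys"
  shows "walk E (join xs ys)" "hd (join xs ys) = hd xs" "last (join xs ys) = last ys"
    "length (join xs ys) = length xs + length ys - 1"
proof -
  obtain y ys' where ys: "ys = y # ys'" using assms(2) unfolding walk_def by (cases ys) auto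
  have "successively E (xs @ ys')"
    using assms ys unfolding walk_succ
    by (cases ys') (auto simp: successively_append_iff successively_Cons)
  then show "walk E (join xs ys)" using assms(1) unfolding walk_succ join_def ys by simp
  show "hd (join xs ys) = hd xs" using assms(1) unfolding walk_def join_def by simp
  show "last (join xs ys) = last ys" using assms(1,3) unfolding walk_def join_def ys
    by (cases ys') auto
  show "length (join xs ys) = length xs + length ys - 1" unfolding join_def ys by simp
qed

lemma walk_rev:
  assumes "\<And>x y. E x y \<Longrightarrow> E y x" "walk E xs"
  shows "walk E (rev xs)"
  using assms unfolding walk_succ by (auto elim: successively_mono)

lemma walk_sub:
  assumes "walk E xs" "i \<le> j" "j < length xs"
  shows "walk E (drop i (take (Suc j) xs))"
    "hd (drop i (take (Suc j) xs)) = xs ! i" "last (drop i (take (Suc j) xs)) = xs ! j"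
    "length (drop i (take (Suc j) xs)) = Suc j - i"
proof -
  have "\<forall>k. Suc k < length (drop i (take (Suc j) xs)) \<longrightarrow>
     E (drop i (take (Suc j) xs) ! k) (drop i (take (Suc j) xs) ! Suc k)"
  proof (intro allI impI)
    fix k assume k: "Suc k < length (drop i (take (Suc j) xs))"
    then have "Suc (i + k) < length xs" using assms by simp
    then have "E (xs ! (i+k)) (xs ! Suc (i+k))" using assms(1) unfolding walk_def by blast
    then show "E (drop i (take (Suc j) xs) ! k) (drop i (take (Suc j) xs) ! Suc k)"
      using k assms by simp
  qed
  moreover have "drop i (take (Suc j) xs) \<noteq> []" using assms by simp
  ultimately show "walk E (drop i (take (Suc j) xs))" unfolding walk_def by blast
  show "hd (drop i (take (Suc j) xs)) = xs ! i" using assms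
    by (simp add: hd_drop_conv_nth)
  show "last (drop i (take (Suc j) xs)) = xs ! j" using assms
    by (simp add: last_conv_nth)
  show "length (drop i (take (Suc j) xs)) = Suc j - i" using assms by simp
qed

lemma dist_le:
  assumes "walk E xs" "hd xs = x" "last xs = y"
  shows "dist E x y \<le> length xs - 1"
  unfolding dist_def
proof (rule Least_le)
  have "xs \<noteq> []" using assms(1) unfolding walk_def by simp
  then show "\<exists>ys. walk E ys \<and> hd ys = x \<and> last ys = y \<and> length ys = Suc (length xs - 1)"
    using assms by (intro exI[of _ xs]) auto
qed

lemma dist_wit:
  assumes "walk E xs" "hd xs = x" "last xs = y"
  shows "\<exists>ys. walk E ys \<and> hd ys = x \<and> last ys = y \<and> length ys = Suc (dist E x y)"
proof -
  have "\<exists>n. \<exists>xs. walk E xs \<and> hd xs = x \<and> last xs = y \<and> length xs = Suc n"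
  proof -
    have "xs \<noteq> []" using assms(1) unfolding walk_def by simp
    then show ?thesis using assms by (intro exI[of _ "length xs - 1"] exI[of _ xs]) auto
  qed
  then show ?thesis unfolding dist_def by (rule LeastI_ex)
qed

lemma ex_rev:
  assumes "\<And>x y. E x y \<Longrightarrow> E y x"
    and "\<exists>xs. walk E xs \<and> hd xs = a \<and> last xs = b \<and> length xs = Suc n"
  shows "\<exists>xs. walk E xs \<and> hd xs = b \<and> last xs = a \<and> length xs = Suc n"
proof -
  obtain xs where xs: "walk E xs" "hd xs = a" "last xs = b" "length xs = Suc n" using assms(2) by blast
  have "xs \<noteq> []" using xs(1) unfolding walk_def by simp
  then show ?thesis
    using xs walk_rev[OF assms(1) xs(1)] by (intro exI[of _ "rev xs"]) (simp add: hd_rev last_rev)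
qed

lemma dist_sym:
  assumes "\<And>x y. E x y \<Longrightarrow> E y x"
  shows "dist E x y = dist E y x"
proof -
  have "(\<lambda>n. \<exists>xs. walk E xs \<and> hd xs = x \<and> last xs = y \<and> length xs = Suc n)
      = (\<lambda>n. \<exists>xs. walk E xs \<and> hd xs = y \<and> last xs = x \<and> length xs = Suc n)"
  proof (rule ext, rule iffI)
    fix n
    assume h: "\<exists>xs. walk E xs \<and> hd xs = x \<and> last xs = y \<and> length xs = Suc n"
    show "\<exists>xs. walk E xs \<and> hd xs = y \<and> last xs = x \<and> length xs = Suc n"
      by (rule ex_rev[of E x y n, OF assms h])
  next
    fix n
    assume h: "\<exists>xs. walk E xs \<and> hd xs = y \<and> last xs = x \<and> length xs = Suc n"
    show "\<exists>xs. walk E xs \<and> hd xs = x \<and> last xs = y \<and> length xs = Suc n"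
      by (rule ex_rev[of E y x n, OF assms h])
  qed
  then show ?thesis unfolding dist_def by simp
qed

lemma dist_tri:
  assumes "walk E xs" "hd xs = x" "last xs = y" "walk E ys" "hd ys = y" "last ys = z"
  shows "dist E x z \<le> dist E x y + dist E y z"
proof -
  obtain as where a: "walk E as" "hd as = x" "last as = y" "length as = Suc (dist E x y)"
    using dist_wit[OF assms(1-3)] by blast
  obtain bs where b: "walk E bs" "hd bs = y" "last bs = z" "length bs = Suc (dist E y z)"
    using dist_wit[OF assms(4-6)] by blast
  have "dist E x z \<le> length (join as bs) - 1"
    using join_walk[of E as bs] a b by (intro dist_le) auto
  then show ?thesis using join_walk[of E as bs] a b by simp
qed

lemma graph_sym: "graph V E \<Longrightarrow> E x y \<Longrightarrow> E y x"
  unfolding graph_def by blast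

lemma dist_self: "dist E x x = 0"
proof -
  have "dist E x x \<le> length [x] - 1" by (rule dist_le) (auto simp: walk_def)
  then show ?thesis by simp
qed

lemma walk_take:
  assumes "walk E xs" "a < length xs"
  shows "walk E (take (Suc a) xs)" "hd (take (Suc a) xs) = hd xs" "last (take (Suc a) xs) = xs ! a"
    "length (take (Suc a) xs) = Suc a"
  using walk_sub[OF assms(1), of 0 a] assms by (auto simp: hd_conv_nth)

lemma walk_drop:
  assumes "walk E xs" "b < length xs"
  shows "walk E (drop b xs)" "hd (drop b xs) = xs ! b" "last (drop b xs) = last xs"
    "length (drop b xs) = length xs - b"
proof -
  have e: "take (Suc (length xs - 1)) xs = xs" using assms by simp
  have ne: "xs \<noteq> []" using assms by auto
  have "length xs - 1 < length xs" using assms by simp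
  then show "walk E (drop b xs)" "hd (drop b xs) = xs ! b" "last (drop b xs) = last xs"
    "length (drop b xs) = length xs - b"
    using walk_sub[OF assms(1), of b "length xs - 1"] assms e ne
    by (auto simp: last_conv_nth)
qed

lemma walk_in_V:
  assumes "graph V E" "walk E xs" "hd xs \<in> V"
  shows "set xs \<subseteq> V"
proof
  fix x assume "x \<in> set xs"
  then obtain k where k: "k < length xs" "x = xs ! k" by (auto simp: in_set_conv_nth)
  show "x \<in> V"
  proof (cases k)
    case 0 then show ?thesis using k assms(2,3) by (auto simp: walk_def hd_conv_nth)
  next
    case (Suc k') then have "E (xs ! k') (xs ! Suc k')" using k assms(2) unfolding walk_def by blast
    then show ?thesis using assms(1) k Suc unfolding graph_def by blast
  qed
qed

lemma pe_step:
  assumes "distinct P" "i < length P" "path_edges P (P ! i) y"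
  shows "\<exists>i'<length P. y = P ! i' \<and> (i' = Suc i \<or> Suc i' = i)"
proof -
  obtain k where k: "Suc k < length P" "{P ! i, y} = {P ! k, P ! Suc k}"
    using assms(3) unfolding path_edges_def by blast
  then have "(P ! i = P ! k \<and> y = P ! Suc k) \<or> (P ! i = P ! Suc k \<and> y = P ! k)"
    by (auto simp: doubleton_eq_iff)
  then show ?thesis
  proof
    assume h: "P ! i = P ! k \<and> y = P ! Suc k"
    then have "i = k" using nth_eq_iff_index_eq[OF assms(1) assms(2)] k by simp
    then show ?thesis using h k by auto
  next
    assume h: "P ! i = P ! Suc k \<and> y = P ! k"
    then have "i = Suc k" using nth_eq_iff_index_eq[OF assms(1) assms(2)] k by simp
    then show ?thesis using h k by (auto intro!: exI[of _ k])
  qed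
qed

lemma pe_lower:
  assumes "distinct P" "walk (path_edges P) W" "hd W = P ! i" "last W = P ! j"
    "i < length P" "j < length P"
  shows "j \<le> i + (length W - 1) \<and> i \<le> j + (length W - 1)"
  using assms
proof (induction W arbitrary: i)
  case Nil then show ?case by (simp add: walk_def)
next
  case (Cons a W)
  show ?case
  proof (cases W)
    case Nil
    then have "P ! i = P ! j" using Cons.prems by simp
    then have "i = j" using nth_eq_iff_index_eq[OF assms(1)] Cons.prems by simp
    then show ?thesis by simp
  next
    case (Cons y rest)
    then have Cons2: "W = y # rest" by simp
    have pe: "path_edges P a y" and wW: "walk (path_edges P) W"
      using Cons.prems(2) Cons2 unfolding walk_succ by auto
    obtain i' where i': "i' < length P" "y = P ! i'" "i' = Suc i \<or> Suc i' = i"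
      using pe_step[OF assms(1) Cons.prems(5)] pe Cons.prems(3) by auto
    have h1: "hd W = P ! i'" using Cons2 i'(2) by simp
    have h2: "last W = P ! j" using Cons2 Cons.prems(4) by simp
    have "j \<le> i' + (length W - 1) \<and> i' \<le> j + (length W - 1)"
      using Cons.IH[OF assms(1) wW h1 h2 i'(1) Cons.prems(6)] .
    then show ?thesis using i'(3) Cons2 by auto
  qed
qed

lemma pe_sym: "path_edges P x y \<Longrightarrow> path_edges P y x"
  unfolding path_edges_def by (auto simp: insert_commute)

lemma walk_pe: "P \<noteq> [] \<Longrightarrow> walk (path_edges P) P"
  unfolding walk_def path_edges_def by blast

lemma path_dist_le:
  assumes "distinct P" "i \<le> j" "j < length P"
  shows "dist (path_edges P) (P ! i) (P ! j) = j - i"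
proof -
  have wP: "walk (path_edges P) P" using assms by (intro walk_pe) auto
  have "dist (path_edges P) (P ! i) (P ! j) \<le> length (drop i (take (Suc j) P)) - 1"
    using walk_sub[OF wP assms(2,3)] by (intro dist_le) auto
  then have le: "dist (path_edges P) (P ! i) (P ! j) \<le> j - i" using assms by simp
  obtain W where W: "walk (path_edges P) W" "hd W = P ! i" "last W = P ! j"
    "length W = Suc (dist (path_edges P) (P ! i) (P ! j))"
    using dist_wit[OF walk_sub(1-3)[OF wP assms(2,3)]] by blast
  have "j \<le> i + (length W - 1)" using pe_lower[OF assms(1) W(1-3)] assms by simp
  then show ?thesis using le W(4) by simp
qed

lemma path_dist:
  assumes "distinct P" "i < length P" "j < length P"
  shows "dist (path_edges P) (P ! i) (P ! j) = (if i \<le> j then j - i else i - j)"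
proof (cases "i \<le> j")
  case True then show ?thesis using path_dist_le assms by simp
next
  case False
  then have "dist (path_edges P) (P ! j) (P ! i) = i - j" using path_dist_le[OF assms(1), of j i] assms by simp
  moreover have "dist (path_edges P) (P ! i) (P ! j) = dist (path_edges P) (P ! j) (P ! i)"
    by (rule dist_sym) (rule pe_sym)
  ultimately show ?thesis using False by simp
qed

lemma iso_dist:
  assumes "isometric_path V E P" "i < length P" "j < length P"
  shows "dist E (P ! i) (P ! j) = (if i \<le> j then j - i else i - j)"
proof -
  have "distinct P" using assms(1) unfolding isometric_path_def is_path_def by simp
  then show ?thesis using assms path_dist[of P i j] unfolding isometric_path_def
    by (metis nth_mem)
qed

lemma geo_sub:
  assumes "walk E Q" "length Q = Suc (dist E (hd Q) (last Q))" "a \<le> b" "b < length Q"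
  shows "dist E (Q ! a) (Q ! b) = b - a"
proof -
  have "dist E (Q ! a) (Q ! b) \<le> length (drop a (take (Suc b) Q)) - 1"
    using walk_sub[OF assms(1) assms(3,4)] by (intro dist_le) auto
  then have le: "dist E (Q ! a) (Q ! b) \<le> b - a" using assms by simp
  have al: "a < length Q" using assms by simp
  obtain R where R: "walk E R" "hd R = Q ! a" "last R = Q ! b" "length R = Suc (dist E (Q ! a) (Q ! b))"
    using dist_wit[OF walk_sub(1-3)[OF assms(1) assms(3,4)]] by blast
  note T = walk_take[OF assms(1) al]
  note D = walk_drop[OF assms(1) assms(4)]
  note J1 = join_walk[OF T(1) R(1)] 
  have j1: "walk E (join (take (Suc a) Q) R)" "hd (join (take (Suc a) Q) R) = hd Q"
    "last (join (take (Suc a) Q) R) = Q ! b"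
    "length (join (take (Suc a) Q) R) = Suc a + Suc (dist E (Q ! a) (Q ! b)) - 1"
    using J1 T R by auto
  note J2 = join_walk[OF j1(1) D(1)]
  have "dist E (hd Q) (last Q) \<le> length (join (join (take (Suc a) Q) R) (drop b Q)) - 1"
    using J2 j1 D by (intro dist_le) auto
  then have "dist E (hd Q) (last Q) \<le> Suc a + Suc (dist E (Q ! a) (Q ! b)) - 1 + (length Q - b) - 1 - 1"
    using J2 j1 D by simp
  then show ?thesis using le assms by linarith
qed

lemma geo_distinct:
  assumes "walk E Q" "length Q = Suc (dist E (hd Q) (last Q))"
  shows "distinct Q"
  unfolding distinct_conv_nth
proof (intro allI impI)
  fix i j assume h: "i < length Q" "j < length Q" "i \<noteq> j"
  show "Q ! i \<noteq> Q ! j"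
  proof
    assume eq: "Q ! i = Q ! j"
    show False
    proof (cases "i < j")
      case True
      then have "dist E (Q ! i) (Q ! j) = j - i" using geo_sub[OF assms, of i j] h by simp
      then show False using eq dist_self[of E "Q ! j"] True by simp
    next
      case False
      then have "dist E (Q ! j) (Q ! i) = i - j" using geo_sub[OF assms, of j i] h by simp
      then show False using eq dist_self[of E "Q ! j"] False h by simp
    qed
  qed
qed

lemma geo_iso:
  assumes "graph V E" "walk E Q" "length Q = Suc (dist E (hd Q) (last Q))" "hd Q \<in> V"
  shows "isometric_path V E Q"
proof -
  have dQ: "distinct Q" by (rule geo_distinct[OF assms(2,3)])
  have sV: "set Q \<subseteq> V" by (rule walk_in_V[OF assms(1,2,4)])
  have "\<forall>x\<in>set Q. \<forall>y\<in>set Q. dist (path_edges Q) x y = dist E x y"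
  proof (intro ballI)
    fix x y assume "x \<in> set Q" "y \<in> set Q"
    then obtain a b where ab: "a < length Q" "x = Q ! a" "b < length Q" "y = Q ! b"
      by (auto simp: in_set_conv_nth)
    have pd: "dist (path_edges Q) x y = (if a \<le> b then b - a else a - b)"
      using path_dist[OF dQ ab(1,3)] ab by simp
    show "dist (path_edges Q) x y = dist E x y"
    proof (cases "a \<le> b")
      case True then show ?thesis using pd geo_sub[OF assms(2,3) True ab(3)] ab by simp
    next
      case False
      have "dist E y x = a - b" using geo_sub[OF assms(2,3), of b a] False ab by simp
      moreover have "dist E x y = dist E y x" by (rule dist_sym) (rule graph_sym[OF assms(1)])
      ultimately show ?thesis using pd False by simp
    qed
  qed
  then show ?thesis unfolding isometric_path_def is_path_def using assms(2) dQ sV by blast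
qed

lemma join_set:
  assumes "walk E xs" "walk E ys" "last xs = hd ys"
  shows "set (join xs ys) = set xs \<union> set ys"
proof -
  obtain y ys' where ys: "ys = y # ys'" using assms(2) unfolding walk_def by (cases ys) auto
  have "xs \<noteq> []" using assms(1) unfolding walk_def by simp
  then have "y \<in> set xs" using assms(3) ys by auto
  then show ?thesis unfolding join_def ys by auto
qed

lemma dist0:
  assumes "walk E xs" "hd xs = x" "last xs = y" "dist E x y = 0"
  shows "x = y"
proof -
  obtain ys where "walk E ys" "hd ys = x" "last ys = y" "length ys = Suc (dist E x y)"
    using dist_wit[OF assms(1-3)] by blast
  then show ?thesis using assms(4) by (cases ys) auto
qed

lemma shadow_eq:
  assumes "distinct P"
  shows "wide_shadow E P v = (\<lambda>m. P ! m) ` {m. m < length P \<and> (\<forall>k<length P. dist E (P ! m) (P ! k) \<le> dist E v (P ! k))}"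
  unfolding wide_shadow_def
  by (auto simp: in_set_conv_nth all_set_conv_all_nth)

lemma card_shadow:
  assumes "distinct P"
  shows "card (wide_shadow E P v) = card {m. m < length P \<and> (\<forall>k<length P. dist E (P ! m) (P ! k) \<le> dist E v (P ! k))}"
  unfolding shadow_eq[OF assms]
  by (rule card_image) (rule inj_on_nth[OF assms], auto)

lemma basics:
  assumes "connected_graph V E" "isometric_path V E P"
  shows "graph V E" "\<And>x y. dist E x y = dist E y x" "distinct P" "set P \<subseteq> V" "walk E P"
    "\<And>x y z. x \<in> V \<Longrightarrow> y \<in> V \<Longrightarrow> z \<in> V \<Longrightarrow> dist E x z \<le> dist E x y + dist E y z"
    "\<And>x y. x \<in> V \<Longrightarrow> y \<in> V \<Longrightarrow> dist E x y = 0 \<Longrightarrow> x = y"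
proof -
  show g: "graph V E" using assms(1) unfolding connected_graph_def by blast
  show "\<And>x y. dist E x y = dist E y x" by (rule dist_sym) (rule graph_sym[OF g])
  show "distinct P" "set P \<subseteq> V" "walk E P" using assms(2) unfolding isometric_path_def is_path_def by auto
  have c: "\<And>x y. x \<in> V \<Longrightarrow> y \<in> V \<Longrightarrow> \<exists>xs. walk E xs \<and> hd xs = x \<and> last xs = y"
    using assms(1) unfolding connected_graph_def by blast
  show "\<And>x y z. x \<in> V \<Longrightarrow> y \<in> V \<Longrightarrow> z \<in> V \<Longrightarrow> dist E x z \<le> dist E x y + dist E y z"
  proof -
    fix x y z assume "x \<in> V" "y \<in> V" "z \<in> V"
    then obtain xs ys where "walk E xs" "hd xs = x" "last xs = y" "walk E ys" "hd ys = y" "last ys = z"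
      using c by metis
    then show "dist E x z \<le> dist E x y + dist E y z" by (rule dist_tri)
  qed
  show "\<And>x y. x \<in> V \<Longrightarrow> y \<in> V \<Longrightarrow> dist E x y = 0 \<Longrightarrow> x = y"
    using c dist0 by metis
qed

lemma fwd:
  assumes cg: "connected_graph V E" and iso: "isometric_path V E P"
    and n3: "length P \<ge> 3" and vV: "v \<in> V - set P"
    and bp: "bypath V E P B" and vB: "v \<in> set B"
  shows "card {m. m < length P \<and> (\<forall>k<length P. dist E (P ! m) (P ! k) \<le> dist E v (P ! k))} = 1"
proof -
  note bs = basics[OF cg iso]
  define n where "n = length P"
  have Pne: "P \<noteq> []" using n3 by auto
  obtain i j where ij: "i < j" "j < n" "hd B = P ! i" "last B = P ! j"
     "set B \<inter> set P = {P ! i, P ! j}" and isoQ: "isometric_path V E (take i P @ B @ drop (Suc j) P)"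
    using bp unfolding bypath_def n_def by blast
  define Q where "Q = take i P @ B @ drop (Suc j) P"
  have Bne: "B \<noteq> []" using bp unfolding bypath_def by auto
  obtain q where q: "q < length B" "B ! q = v" using vB by (auto simp: in_set_conv_nth)
  have lenQ: "length Q = i + length B + (n - Suc j)" unfolding Q_def using ij n_def Pne by (simp split: if_splits)
  have Qp: "Q ! (i + q) = v" unfolding Q_def using ij q n_def by (simp add: nth_append)
  have Q0: "Q ! 0 = P ! 0"
  proof (cases i)
    case 0 then show ?thesis unfolding Q_def using ij Bne by (simp add: hd_conv_nth nth_append)
  next
    case (Suc i') then show ?thesis unfolding Q_def using ij n_def by (simp add: nth_append)
  qed
  have QL: "Q ! (length Q - 1) = P ! (n - 1)"
  proof (cases "Suc j < n")
    case True
    then have "last Q = last P" unfolding Q_def n_def Pne by (simp split: if_splits)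
    moreover have "Q \<noteq> []" "P \<noteq> []" using lenQ True n_def by auto
    ultimately show ?thesis by (simp add: last_conv_nth n_def)
  next
    case False
    then have "j = n - 1" using ij by simp
    then have "last Q = P ! (n - 1)" unfolding Q_def n_def using ij Bne False by simp
    moreover have "Q \<noteq> []" using lenQ Bne by auto
    ultimately show ?thesis by (simp add: last_conv_nth)
  qed
  have isoQ': "isometric_path V E Q" using isoQ unfolding Q_def .
  have lQ0: "0 < length Q" using lenQ Bne by simp
  have dPP: "dist E (P ! 0) (P ! (n - 1)) = n - 1" using iso_dist[OF iso, of 0 "n-1"] n3 n_def Pne by simp
  have dQQ: "dist E (Q ! 0) (Q ! (length Q - 1)) = length Q - 1" using iso_dist[OF isoQ', of 0 "length Q - 1"] lQ0 by simp
  have lQn: "length Q = n" using dPP dQQ Q0 QL lQ0 n3 n_def Pne by (simp split: if_splits)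
  define p where "p = i + q"
  have pn: "p < n" using lenQ lQn q p_def by simp
  have f0: "dist E v (P ! 0) = p"
    using iso_dist[OF isoQ', of 0 p] Q0 Qp pn lQn bs(2) p_def by simp
  have fL: "dist E v (P ! (n - 1)) = n - 1 - p"
    using iso_dist[OF isoQ', of p "n - 1"] QL Qp pn lQn p_def by (simp split: if_splits)
  have inV: "\<And>k. k < n \<Longrightarrow> P ! k \<in> V" using bs(4) n_def by auto
  have vV': "v \<in> V" using vV by simp
  have "{m. m < length P \<and> (\<forall>k<length P. dist E (P ! m) (P ! k) \<le> dist E v (P ! k))} = {p}"
  proof (intro equalityI subsetI)
    fix m assume "m \<in> {m. m < length P \<and> (\<forall>k<length P. dist E (P ! m) (P ! k) \<le> dist E v (P ! k))}"
    then have m: "m < n" "\<And>k. k < n \<Longrightarrow> dist E (P ! m) (P ! k) \<le> dist E v (P ! k)" using n_def by auto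
    have "m \<le> p" using m(2)[of 0] iso_dist[OF iso, of m 0] f0 m(1) n_def Pne by (simp split: if_splits)
    moreover have "n - 1 - m \<le> n - 1 - p" using m(2)[of "n-1"] iso_dist[OF iso, of m "n-1"] fL m(1) n_def n3 Pne by (simp split: if_splits)
    ultimately show "m \<in> {p}" using m(1) pn by simp
  next
    fix m assume "m \<in> {p}"
    then have mp: "m = p" by simp
    have "\<forall>k<n. dist E (P ! p) (P ! k) \<le> dist E v (P ! k)"
    proof (intro allI impI)
      fix k assume k: "k < n"
      have t1: "dist E (P ! 0) (P ! k) \<le> dist E (P ! 0) v + dist E v (P ! k)"
        using bs(6) inV k vV' n3 by simp
      have t2: "dist E (P ! k) (P ! (n - 1)) \<le> dist E (P ! k) v + dist E v (P ! (n - 1))"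
        using bs(6) inV k vV' n3 by simp
      have "k \<le> p + dist E v (P ! k)" using t1 iso_dist[OF iso, of 0 k] k f0 bs(2)[of "P ! 0" v] n_def Pne by (simp split: if_splits)
      moreover have "n - 1 - k \<le> dist E v (P ! k) + (n - 1 - p)"
        using t2 iso_dist[OF iso, of k "n-1"] k fL bs(2)[of "P ! k" v] n_def Pne by (simp split: if_splits)
      ultimately show "dist E (P ! p) (P ! k) \<le> dist E v (P ! k)"
        using iso_dist[OF iso, of p k] k pn n_def Pne by (auto split: if_splits)
    qed
    then show "m \<in> {m. m < length P \<and> (\<forall>k<length P. dist E (P ! m) (P ! k) \<le> dist E v (P ! k))}"
      using mp pn n_def Pne by (simp split: if_splits)
  qed
  then show ?thesis by simp
qed

lemma bwd_pair:
  assumes cg: "connected_graph V E" and iso: "isometric_path V E P"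
    and n3: "length P \<ge> 3" and vV: "v \<in> V - set P"
    and c1: "card {m. m < length P \<and> (\<forall>k<length P. dist E (P ! m) (P ! k) \<le> dist E v (P ! k))} = 1"
  shows "\<exists>k2 k1. k2 < k1 \<and> k1 < length P \<and> dist E v (P ! k2) + dist E v (P ! k1) \<le> k1 - k2"
proof -
  note bs = basics[OF cg iso]
  define n where "n = length P"
  define f where "f k = dist E v (P ! k)" for k
  define M where "M = {m. m < n \<and> (\<forall>k<n. dist E (P ! m) (P ! k) \<le> f k)}"
  have Pne: "P \<noteq> []" using n3 by auto
  have fpos: "\<And>k. k < n \<Longrightarrow> f k \<ge> 1"
  proof -
    fix k assume k: "k < n"
    have "P ! k \<in> V" using bs(4) k n_def by auto
    moreover have "v \<noteq> P ! k" using vV k n_def by auto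
    ultimately show "f k \<ge> 1" using bs(7)[of v "P ! k"] vV unfolding f_def by force
  qed
  have dP: "\<And>a b. a < n \<Longrightarrow> b < n \<Longrightarrow> dist E (P ! a) (P ! b) = (if a \<le> b then b - a else a - b)"
    using iso_dist[OF iso] n_def by simp
  have "card M = 1" using c1 unfolding M_def f_def n_def .
  then obtain m where Mm: "M = {m}" by (rule card_1_singletonE)
  have m: "m < n" "\<And>k. k < n \<Longrightarrow> dist E (P ! m) (P ! k) \<le> f k" using Mm unfolding M_def by auto
  have up: "\<exists>k<n. k + f k \<le> m" if hu: "m + 1 < n"
  proof -
    have "m + 1 \<notin> M" using Mm by simp
    then obtain k where k: "k < n" "dist E (P ! (m+1)) (P ! k) > f k" using hu unfolding M_def by auto
    have "dist E (P ! m) (P ! k) \<le> f k" using m(2) k(1) .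
    then have "k + f k \<le> m" using k dP[of "m+1" k] dP[of m k] hu m(1) by (auto split: if_splits)
    then show ?thesis using k(1) by blast
  qed
  have down: "\<exists>k<n. m + f k \<le> k" if hd1: "m \<ge> 1"
  proof -
    have "m - 1 \<notin> M" using Mm hd1 by simp
    then obtain k where k: "k < n" "dist E (P ! (m-1)) (P ! k) > f k" using hd1 m(1) unfolding M_def by auto
    have "dist E (P ! m) (P ! k) \<le> f k" using m(2) k(1) .
    then show ?thesis using k dP[of "m-1" k] dP[of m k] hd1 m(1) by (auto split: if_splits)
  qed
  have m1: "m \<ge> 1"
  proof (rule ccontr)
    assume "\<not> m \<ge> 1"
    then have "m = 0" by simp
    then obtain k where "k < n" "k + f k \<le> 0" using up n3 n_def by auto
    then show False using fpos by fastforce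
  qed
  have m2: "m + 1 < n"
  proof (rule ccontr)
    assume "\<not> m + 1 < n"
    then have "m = n - 1" using m(1) by simp
    then obtain k where "k < n" "n - 1 + f k \<le> k" using down m1 by auto
    then show False using fpos[of k] by simp
  qed
  obtain k2 where k2: "k2 < n" "k2 + f k2 \<le> m" using up m2 by auto
  obtain k1 where k1: "k1 < n" "m + f k1 \<le> k1" using down m1 by auto
  have "k2 < k1" using k1 k2 fpos[of k1] fpos[of k2] by simp
  then show ?thesis using k1 k2 unfolding f_def n_def by (intro exI[of _ k2] exI[of _ k1]) auto
qed

lemma bwd_build:
  assumes cg: "connected_graph V E" and iso: "isometric_path V E P"
    and n3: "length P \<ge> 3" and vV: "v \<in> V - set P"
    and kk: "k2 < k1" "k1 < length P" "dist E v (P ! k2) + dist E v (P ! k1) \<le> k1 - k2"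
  shows "\<exists>B. bypath V E P B \<and> v \<in> set B"
proof -
  note bs = basics[OF cg iso]
  define n where "n = length P"
  have Pne: "P \<noteq> []" using n3 by auto
  have inV: "\<And>k. k < n \<Longrightarrow> P ! k \<in> V" using bs(4) n_def Pne by auto
  have vV': "v \<in> V" using vV by simp
  have c: "\<And>x y. x \<in> V \<Longrightarrow> y \<in> V \<Longrightarrow> \<exists>xs. walk E xs \<and> hd xs = x \<and> last xs = y"
    using cg unfolding connected_graph_def by blast
  have dP: "\<And>a b. a < n \<Longrightarrow> b < n \<Longrightarrow> dist E (P ! a) (P ! b) = (if a \<le> b then b - a else a - b)"
    using iso_dist[OF iso] n_def Pne by simp
  have k2n: "k2 < n" using kk n_def Pne by simp
  have k1n: "k1 < n" using kk n_def Pne by simp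
  obtain W1 where W1: "walk E W1" "hd W1 = P ! k2" "last W1 = v" "length W1 = Suc (dist E (P ! k2) v)"
    using c[OF inV[OF k2n] vV'] dist_wit by metis
  obtain W2 where W2: "walk E W2" "hd W2 = v" "last W2 = P ! k1" "length W2 = Suc (dist E v (P ! k1))"
    using c[OF vV' inV[OF k1n]] dist_wit by metis
  note T = walk_take[OF bs(5) k2n[unfolded n_def]]
  note D = walk_drop[OF bs(5) k1n[unfolded n_def]]
  have W1ne: "W1 \<noteq> []" using W1(1) unfolding walk_def by simp
  define X1 where "X1 = join (take (Suc k2) P) W1"
  have X1: "walk E X1" "hd X1 = hd P" "last X1 = v" "length X1 = Suc k2 + Suc (dist E (P ! k2) v) - 1"
    "v \<in> set X1"
    using join_walk[OF T(1) W1(1)] join_set[OF T(1) W1(1)] T W1 W1ne last_in_set[OF W1ne] unfolding X1_def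
    by auto
  define X2 where "X2 = join X1 W2"
  have X2: "walk E X2" "hd X2 = hd P" "last X2 = P ! k1" "length X2 = length X1 + Suc (dist E v (P ! k1)) - 1"
    "v \<in> set X2"
    using join_walk[OF X1(1) W2(1)] join_set[OF X1(1) W2(1)] X1 W2 unfolding X2_def by auto
  define Q where "Q = join X2 (drop k1 P)"
  have Q: "walk E Q" "hd Q = hd P" "last Q = last P" "length Q = length X2 + (n - k1) - 1"
    "v \<in> set Q"
    using join_walk[OF X2(1) D(1)] join_set[OF X2(1) D(1)] X2 D n_def unfolding Q_def by auto
  have dsym: "dist E (P ! k2) v = dist E v (P ! k2)" by (rule bs(2))
  have lQle: "length Q \<le> n" using Q(4) X2(4) X1(4) kk dsym n_def Pne by simp
  have hdP: "hd P = P ! 0" using Pne by (simp add: hd_conv_nth)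
  have lastP: "last P = P ! (n - 1)" using Pne n_def Pne by (simp add: last_conv_nth)
  have dPL: "dist E (hd P) (last P) = n - 1" using dP[of 0 "n-1"] hdP lastP n3 n_def Pne by simp
  have "dist E (hd P) (last P) \<le> length Q - 1" using dist_le[OF Q(1-3)] .
  then have lQ: "length Q = n" using lQle dPL n3 n_def Pne by simp
  have geoQ: "length Q = Suc (dist E (hd Q) (last Q))" using lQ dPL Q n3 n_def Pne by simp
  have P0V: "P ! 0 \<in> V" using inV[of 0] n3 n_def Pne by simp
  have isoQ: "isometric_path V E Q" using geo_iso[OF bs(1) Q(1) geoQ] Q(2) P0V hdP by simp
  have dQ: "distinct Q" and QV: "set Q \<subseteq> V" using isoQ unfolding isometric_path_def is_path_def by auto
  have Qne: "Q \<noteq> []" using lQ n3 n_def Pne by auto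
  have Q0: "Q ! 0 = P ! 0" using Q(2) hdP Qne by (simp add: hd_conv_nth)
  have QL: "Q ! (n - 1) = P ! (n - 1)" using Q(3) lastP Qne lQ by (simp add: last_conv_nth)
  have QinP: "\<And>t. t < n \<Longrightarrow> Q ! t \<in> set P \<Longrightarrow> Q ! t = P ! t"
  proof -
    fix t assume t: "t < n" "Q ! t \<in> set P"
    then obtain s where s: "s < n" "Q ! t = P ! s" using n_def Pne by (auto simp: in_set_conv_nth)
    have "dist E (Q ! 0) (Q ! t) = t" using iso_dist[OF isoQ, of 0 t] t lQ by simp
    then have "dist E (P ! 0) (P ! s) = t" using Q0 s by simp
    then have "s = t" using dP[of 0 s] s n3 n_def Pne by simp
    then show "Q ! t = P ! t" using s by simp
  qed
  obtain p where p: "p < n" "Q ! p = v" using Q(5) lQ by (auto simp: in_set_conv_nth)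
  have vnP: "v \<notin> set P" using vV by simp
  have p0: "0 < p" using p Q0 vnP Pne by (cases p) auto
  have pL: "p < n - 1" using p QL vnP n3 n_def Pne by (cases "p = n - 1") auto
  define I where "I = {t. t < p \<and> Q ! t \<in> set P}"
  define J where "J = {t. p < t \<and> t < n \<and> Q ! t \<in> set P}"
  have fI: "finite I" unfolding I_def by simp
  have fJ: "finite J" unfolding J_def by simp
  have neI: "0 \<in> I" unfolding I_def using p0 Q0 Pne by simp
  have neJ: "n - 1 \<in> J" unfolding J_def using pL QL Pne n3 n_def Pne by simp
  define i where "i = Max I"
  define j where "j = Min J"
  have iI: "i \<in> I" unfolding i_def using fI neI Max_in by blast
  have jJ: "j \<in> J" unfolding j_def using fJ neJ Min_in by blast
  have imax: "\<And>t. t \<in> I \<Longrightarrow> t \<le> i" unfolding i_def using fI by simp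
  have jmin: "\<And>t. t \<in> J \<Longrightarrow> j \<le> t" unfolding j_def using fJ by simp
  have ip: "i < p" and Qi: "Q ! i = P ! i" using iI QinP p unfolding I_def by auto
  have pj: "p < j" and jn: "j < n" and Qj: "Q ! j = P ! j" using jJ QinP unfolding J_def by auto
  have between: "\<And>t. i \<le> t \<Longrightarrow> t \<le> j \<Longrightarrow> Q ! t \<in> set P \<Longrightarrow> t = i \<or> t = j"
  proof -
    fix t assume t: "i \<le> t" "t \<le> j" "Q ! t \<in> set P"
    show "t = i \<or> t = j"
    proof (cases "t < p")
      case True then have "t \<in> I" unfolding I_def using t by simp
      then show ?thesis using imax t by force
    next
      case False
      then have "t \<noteq> p" using t p vnP by auto
      then have "t \<in> J" unfolding J_def using t False jn by simp
      then show ?thesis using jmin t by force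
    qed
  qed
  define B where "B = drop i (take (Suc j) Q)"
  have ij: "i \<le> j" "j < length Q" using ip pj jn lQ by auto
  note SB = walk_sub[OF Q(1) ij]
  have B: "walk E B" "hd B = P ! i" "last B = P ! j" "length B = Suc j - i"
    using SB Qi Qj unfolding B_def by auto
  have Bnth: "\<And>r. r < length B \<Longrightarrow> B ! r = Q ! (i + r)" unfolding B_def using ij by simp
  have vB: "v \<in> set B"
  proof -
    have "p - i < length B" using B(4) ip pj by simp
    then have "B ! (p - i) \<in> set B" by simp
    then show ?thesis using Bnth[of "p - i"] ip pj p B(4) by simp
  qed
  have BP: "set B \<inter> set P = {P ! i, P ! j}"
  proof (intro equalityI subsetI)
    fix x assume "x \<in> set B \<inter> set P"
    then obtain r where r: "r < length B" "x = B ! r" "x \<in> set P" by (auto simp: in_set_conv_nth)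
    then have "Q ! (i + r) \<in> set P" using Bnth by simp
    then have "i + r = i \<or> i + r = j" using between[of "i + r"] r B(4) by simp
    then show "x \<in> {P ! i, P ! j}" using r Bnth Qi Qj by auto
  next
    fix x assume "x \<in> {P ! i, P ! j}"
    moreover have "B \<noteq> []" using B(1) unfolding walk_def by simp
    moreover have "hd B \<in> set B" "last B \<in> set B" using \<open>B \<noteq> []\<close> by auto
    ultimately show "x \<in> set B \<inter> set P" using B(2,3) jn ij n_def Pne by auto
  qed
  have distB: "distinct B" unfolding B_def using dQ by simp
  have setB: "set B \<subseteq> V" unfolding B_def using QV by (meson order_trans set_drop_subset set_take_subset)
  have lenB: "length B \<ge> 3" using B(4) ip pj by simp
  have in1: "i < n" using ip p by simp
  note T2 = walk_take[OF bs(5) in1[unfolded n_def]]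
  note D2 = walk_drop[OF bs(5) jn[unfolded n_def]]
  define Q' where "Q' = join (join (take (Suc i) P) B) (drop j P)"
  have J1: "walk E (join (take (Suc i) P) B)" "hd (join (take (Suc i) P) B) = hd P"
    "last (join (take (Suc i) P) B) = P ! j" "length (join (take (Suc i) P) B) = Suc i + (Suc j - i) - 1"
    using join_walk[OF T2(1) B(1)] T2 B by auto
  have Q': "walk E Q'" "hd Q' = hd P" "last Q' = last P" "length Q' = n"
    using join_walk[OF J1(1) D2(1)] J1 D2 ij jn n_def unfolding Q'_def by auto
  have isoQ': "isometric_path V E Q'"
    using geo_iso[OF bs(1) Q'(1)] Q' dPL hdP P0V n3 n_def Pne by simp
  have Bhd: "B = P ! i # tl B" using B(1,2) unfolding walk_def by (cases B) auto
  have eqQ': "Q' = take i P @ B @ drop (Suc j) P"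
  proof -
    have "join (take (Suc i) P) B = take i P @ B"
      unfolding join_def using in1 n_def Bhd by (subst Bhd) (simp add: take_Suc_conv_app_nth)
    then show ?thesis unfolding Q'_def join_def Pne by (simp add: drop_Suc tl_drop)
  qed
  have "bypath V E P B"
    unfolding bypath_def is_path_def
    using B(1) distB setB lenB ip pj jn B(2,3) BP isoQ' eqQ' n_def
    by (intro conjI exI[of _ i] exI[of _ j]) auto
  then show ?thesis using vB by blast
qed

theorem lemma2p8:
  fixes V :: "'a set" and E :: "'a \<Rightarrow> 'a \<Rightarrow> bool" and P :: "'a list" and v :: 'a
  assumes "connected_graph V E"
    and "isometric_path V E P"
    and "length P \<ge> 3"
    and "v \<in> V - set P"
  shows "card (wide_shadow E P v) = 1 \<longleftrightarrow> (\<exists>B. bypath V E P B \<and> v \<in> set B)"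
proof
  have dP: "distinct P" using basics[OF assms(1,2)] by simp
  {
    assume "card (wide_shadow E P v) = 1"
    then have c: "card {m. m < length P \<and> (\<forall>k<length P. dist E (P ! m) (P ! k) \<le> dist E v (P ! k))} = 1"
      using card_shadow[OF dP] by simp
    obtain k2 k1 where "k2 < k1" "k1 < length P" "dist E v (P ! k2) + dist E v (P ! k1) \<le> k1 - k2"
      using bwd_pair[OF assms c] by blast
    then show "\<exists>B. bypath V E P B \<and> v \<in> set B" using bwd_build[OF assms] by blast
  }
  {
    assume "\<exists>B. bypath V E P B \<and> v \<in> set B"
    then obtain B where "bypath V E P B" "v \<in> set B" by blast
    then have "card {m. m < length P \<and> (\<forall>k<length P. dist E (P ! m) (P ! k) \<le> dist E v (P ! k))} = 1"
      using fwd[OF assms] by blast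
    then show "card (wide_shadow E P v) = 1" using card_shadow[OF dP] by simp
  }
qed

end
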